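(* Let $0<\alpha\le\delta<\infty$ and let $p\in\mathcal M_1^+$ with $a(p)\in X_{\alpha,\delta}$. Then for all $0\le q\le q'\le1$ one has $a(\mathcal R_q(p))_k\le a(\mathcal R_{q'}(p))_k$ for all $k\in\mathbb N_0$. In particular, $a(\mathcal R_q(p))\in X_{\alpha,\delta}$ for all $0\le q\le1$.
   Context: $\mathcal M_1^+$ is the set of probability measures on $\mathbb N_0$, identified with nonnegative sequences summing to $1$. For $q\in[0,1]$, $$T^{(q)}_{ij,k\ell}=C^{(q)}_{k\ell}\,\delta_{i+j,k+\ell}\,(1+\min\{k,\ell,i,j\})\,q^{\max\{0,\ \min\{k,\ell\}-\min\{i,j\}\}},$$ with $0^0=1$ and $C^{(q)}_{k\ell}>0$ chosen so that $\sum_{i,j\ge0}T^{(q)}_{ij,k\ell}=1$; $\mathcal R_q(p)_i=\sum_{j,k,\ell\ge0}T^{(q)}_{ij,k\ell}p_kp_\ell$. For $p\in\mathcal M_1^+$, $a(p)_k=\frac{1}{k+1}\sum_{\ell\ge k}\binom{\ell}{k}p_\ell\in[0,\infty]$. $X_{\alpha,\delta}$ is the set of real sequences $a$ with $a_0=1$, $a_1=\alpha$, $0\le a_k\le\delta^k$ for $k\ge2$. *)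

theory Defs
  imports "HOL-Analysis.Analysis"
begin

definition M1plus :: "(nat \<Rightarrow> real) set" where
  "M1plus = {p. (\<forall>k. 0 \<le> p k) \<and> p sums 1}"

text \<open>Unnormalised kernel weight (without the constant C). Note 0^0 = 1 in Isabelle,
  and nat subtraction truncates at 0, giving max{0, min{k,l} - min{i,j}}.\<close>
definition Tw :: "real \<Rightarrow> nat \<Rightarrow> nat \<Rightarrow> nat \<Rightarrow> nat \<Rightarrow> real" where
  "Tw q i j k l = (if i + j = k + l then
      (1 + real (min (min k l) (min i j))) * q ^ (min k l - min i j) else 0)"

text \<open>Normalising constant: the sum over all i,j of Tw is a finite sum over i+j=k+l.\<close>
definition C :: "real \<Rightarrow> nat \<Rightarrow> nat \<Rightarrow> real" where
  "C q k l = 1 / (\<Sum>i\<le>k + l. Tw q i (k + l - i) k l)"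

definition T :: "real \<Rightarrow> nat \<Rightarrow> nat \<Rightarrow> nat \<Rightarrow> nat \<Rightarrow> real" where
  "T q i j k l = C q k l * Tw q i j k l"

definition R :: "real \<Rightarrow> (nat \<Rightarrow> real) \<Rightarrow> nat \<Rightarrow> real" where
  "R q p i = (\<Sum>\<^sub>\<infinity>(j, k, l) \<in> UNIV. T q i j k l * p k * p l)"

definition a :: "(nat \<Rightarrow> real) \<Rightarrow> nat \<Rightarrow> ennreal" where
  "a p k = ennreal (1 / (real k + 1)) *
     (\<Sum>l. if k \<le> l then ennreal (real (l choose k) * p l) else 0)"

definition X :: "real \<Rightarrow> real \<Rightarrow> (nat \<Rightarrow> real) set" where
  "X \<alpha> \<delta> = {b. b 0 = 1 \<and> b 1 = \<alpha> \<and> (\<forall>k\<ge>2. 0 \<le> b k \<and> b k \<le> \<delta> ^ k)}"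

definition aInX :: "(nat \<Rightarrow> real) \<Rightarrow> real \<Rightarrow> real \<Rightarrow> bool" where
  "aInX p \<alpha> \<delta> \<longleftrightarrow> (\<forall>k. a p k \<noteq> \<infinity>) \<and> (\<lambda>k. enn2real (a p k)) \<in> X \<alpha> \<delta>"

end

theory Submission
  imports Defs
begin

definition W :: "real \<Rightarrow> nat \<Rightarrow> nat \<Rightarrow> real" where
  "W q k l = (\<Sum>i\<le>k+l. Tw q i (k+l-i) k l)"

definition G :: "real \<Rightarrow> nat \<Rightarrow> nat \<Rightarrow> nat \<Rightarrow> real" where
  "G q k l r = (\<Sum>i\<le>k+l. real (i choose r) * T q i (k+l-i) k l)"

lemma Tw_nonneg: "0 \<le> q \<Longrightarrow> 0 \<le> Tw q i j k l"
  by (simp add: Tw_def)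

lemma Tw_diag: "i \<le> k + l \<Longrightarrow> Tw q i (k+l-i) k l
   = (1 + real (min (min k l) (min i (k+l-i)))) * q ^ (min k l - min i (k+l-i))"
  by (simp add: Tw_def)

lemma W_pos: "0 \<le> q \<Longrightarrow> 0 < W q k l"
proof -
  assume q: "0 \<le> q"
  have "0 < Tw q k (k+l-k) k l" by (simp add: Tw_def)
  also have "\<dots> \<le> W q k l" unfolding W_def
    by (rule member_le_sum) (auto intro: Tw_nonneg q)
  finally show ?thesis .
qed

lemma T_eq: "T q i j k l = Tw q i j k l / W q k l"
  by (simp add: T_def C_def W_def)

lemma T_nonneg: "0 \<le> q \<Longrightarrow> 0 \<le> T q i j k l"
  by (simp add: T_eq Tw_nonneg W_pos less_imp_le)

lemma T_le1: "0 \<le> q \<Longrightarrow> T q i j k l \<le> 1"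
proof -
  assume q: "0 \<le> q"
  show ?thesis
  proof (cases "i + j = k + l")
    case True
    then have j: "j = k + l - i" and i: "i \<le> k + l" by auto
    have "Tw q i j k l \<le> W q k l" unfolding W_def j
      by (rule member_le_sum) (use i in \<open>auto intro: Tw_nonneg q\<close>)
    then show ?thesis using W_pos[OF q, of k l] by (simp add: T_eq)
  next
    case False
    then show ?thesis by (simp add: T_eq Tw_def)
  qed
qed

lemma T_off: "k + l < i \<Longrightarrow> T q i (k+l-i) k l = 0"
  by (simp add: T_eq Tw_def)

lemma G_eq: "G q k l r = (\<Sum>i\<le>k+l. real (i choose r) * Tw q i (k+l-i) k l) / W q k l"
  by (simp add: G_def T_eq sum_divide_distrib)

lemma sum_rev_le: "(\<Sum>i\<le>(n::nat). f (n - i)) = (\<Sum>i\<le>n. (f i :: real))"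
  using sum.atLeastAtMost_rev[of f 0 n] by (simp add: atMost_atLeast0)

lemma Tw_sym: "i \<le> k + l \<Longrightarrow> Tw q (k+l-i) i k l = Tw q i (k+l-i) k l"
  by (simp add: Tw_def min.commute)

lemma sum_sym:
  "(\<Sum>i\<le>k+l. f i * Tw q i (k+l-i) k l) = (\<Sum>i\<le>k+l. f (k+l-i) * Tw q i (k+l-i) k l)"
proof -
  have "(\<Sum>i\<le>k+l. f i * Tw q i (k+l-i) k l)
     = (\<Sum>i\<le>k+l. f (k+l-i) * Tw q (k+l-i) (k+l-(k+l-i)) k l)"
    by (rule sum_rev_le[symmetric])
  also have "\<dots> = (\<Sum>i\<le>k+l. f (k+l-i) * Tw q i (k+l-i) k l)"
    by (rule sum.cong) (auto simp: Tw_sym)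
  finally show ?thesis .
qed


lemma phi_step:
  assumes "2*(t+1) \<le> (n::nat)"
  shows "(t+1 choose r) + (n-(t+1) choose r) \<le> (t choose r) + (n-t choose r)"
proof (cases r)
  case 0 then show ?thesis by simp
next
  case (Suc s)
  have nt: "n - t = Suc (n - (t+1))" using assms by simp
  have "t choose s \<le> (n - (t+1)) choose s"
    by (rule binomial_right_mono) (use assms in simp)
  then show ?thesis unfolding Suc nt by simp
qed

lemma phi_mono:
  assumes "t \<le> t'" "2*t' \<le> (n::nat)"
  shows "(t' choose r) + (n-t' choose r) \<le> (t choose r) + (n-t choose r)"
proof -
  have "\<And>d. 2*(t+d) \<le> n \<Longrightarrow> (t+d choose r) + (n-(t+d) choose r) \<le> (t choose r) + (n-t choose r)"
  proof -
    fix d show "2*(t+d) \<le> n \<Longrightarrow> (t+d choose r) + (n-(t+d) choose r) \<le> (t choose r) + (n-t choose r)"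
    proof (induction d)
      case 0 then show ?case by simp
    next
      case (Suc d)
      have "(t+Suc d choose r) + (n-(t+Suc d) choose r) \<le> (t+d choose r) + (n-(t+d) choose r)"
        using phi_step[of "t+d" n r] Suc.prems by simp
      also have "\<dots> \<le> (t choose r) + (n-t choose r)" using Suc by simp
      finally show ?case .
    qed
  qed
  from this[of "t'-t"] assms show ?thesis by simp
qed

lemma H_mono:
  fixes n i j :: nat
  assumes "i \<le> n" "j \<le> n" "min i (n-i) \<le> min j (n-j)"
  shows "real (j choose r) + real ((n-j) choose r) \<le> real (i choose r) + real ((n-i) choose r)"
proof -
  define ti where "ti = min i (n-i)"
  define tj where "tj = min j (n-j)"
  have ei: "(i choose r) + ((n-i) choose r) = (ti choose r) + ((n-ti) choose r)"
    unfolding ti_def using assms by (cases "i \<le> n - i") (auto simp: min_def)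
  have ej: "(j choose r) + ((n-j) choose r) = (tj choose r) + ((n-tj) choose r)"
    unfolding tj_def using assms by (cases "j \<le> n - j") (auto simp: min_def)
  have "(tj choose r) + ((n-tj) choose r) \<le> (ti choose r) + ((n-ti) choose r)"
    by (rule phi_mono) (use assms in \<open>auto simp: ti_def tj_def\<close>)
  then have "(j choose r) + ((n-j) choose r) \<le> (i choose r) + ((n-i) choose r)"
    using ei ej by simp
  then show ?thesis by (metis of_nat_add of_nat_le_iff)
qed

lemma pow_mlr:
  fixes q q' :: real
  assumes "0 \<le> q" "q \<le> q'" "ej \<le> ei"
  shows "q ^ ei * q' ^ ej \<le> q' ^ ei * q ^ ej"
proof -
  obtain d where d: "ei = ej + d" using assms(3) le_Suc_ex by blast
  have "q ^ d \<le> q' ^ d" by (rule power_mono) (use assms in auto)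
  then have "(q ^ ej * q' ^ ej) * q ^ d \<le> (q ^ ej * q' ^ ej) * q' ^ d"
    by (rule mult_left_mono) (use assms in auto)
  then show ?thesis unfolding d power_add by (simp add: algebra_simps)
qed

lemma w_mlr:
  fixes q q' :: real
  assumes "0 \<le> q" "q \<le> q'" "i \<le> k+l" "j \<le> k+l" "min i (k+l-i) \<le> min j (k+l-j)"
  shows "Tw q i (k+l-i) k l * Tw q' j (k+l-j) k l \<le> Tw q' i (k+l-i) k l * Tw q j (k+l-j) k l"
proof -
  define ci where "ci = 1 + real (min (min k l) (min i (k+l-i)))"
  define cj where "cj = 1 + real (min (min k l) (min j (k+l-j)))"
  define ei where "ei = min k l - min i (k+l-i)"
  define ej where "ej = min k l - min j (k+l-j)"
  have "ej \<le> ei" using assms(5) unfolding ei_def ej_def by (rule diff_le_mono2)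
  then have "q ^ ei * q' ^ ej \<le> q' ^ ei * q ^ ej" by (rule pow_mlr[OF assms(1,2)])
  then have "(ci * cj) * (q ^ ei * q' ^ ej) \<le> (ci * cj) * (q' ^ ei * q ^ ej)"
    by (rule mult_left_mono) (simp add: ci_def cj_def)
  then show ?thesis using assms(3,4)
    by (simp add: Tw_diag ci_def[symmetric] cj_def[symmetric] ei_def[symmetric] ej_def[symmetric] algebra_simps)
qed

lemma D_pair:
  fixes q q' :: real and r k l :: nat
  assumes "0 \<le> q" "q \<le> q'" "i \<le> k+l" "j \<le> k+l"
  defines "H \<equiv> \<lambda>i. real (i choose r) + real ((k+l-i) choose r)"
    and "w \<equiv> \<lambda>i. Tw q i (k+l-i) k l" and "w' \<equiv> \<lambda>i. Tw q' i (k+l-i) k l"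
  shows "(H i - H j) * (w i * w' j - w' i * w j) \<le> 0"
proof (cases "min i (k+l-i) \<le> min j (k+l-j)")
  case True
  have "H j \<le> H i" unfolding H_def by (rule H_mono) (use assms True in auto)
  moreover have "w i * w' j \<le> w' i * w j" unfolding w_def w'_def
    by (rule w_mlr) (use assms True in auto)
  ultimately show ?thesis by (simp add: mult_nonneg_nonpos)
next
  case False
  have "H i \<le> H j" unfolding H_def by (rule H_mono) (use assms False in auto)
  moreover have "w j * w' i \<le> w' j * w i" unfolding w_def w'_def
    by (rule w_mlr) (use assms False in auto)
  ultimately have "(H j - H i) * (w j * w' i - w' j * w i) \<le> 0" by (simp add: mult_nonneg_nonpos)
  moreover have "(H i - H j) * (w i * w' j - w' i * w j) = (H j - H i) * (w j * w' i - w' j * w i)"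
    by (simp add: algebra_simps)
  ultimately show ?thesis by linarith
qed


lemma G_mono:
  fixes q q' :: real
  assumes q: "0 \<le> q" "q \<le> q'"
  shows "G q k l r \<le> G q' k l r"
proof -
  define n where "n = k + l"
  define h where "h = (\<lambda>i. real (i choose r))"
  define H where "H = (\<lambda>i. real (i choose r) + real ((k+l-i) choose r))"
  define w where "w = (\<lambda>i. Tw q i (k+l-i) k l)"
  define w' where "w' = (\<lambda>i. Tw q' i (k+l-i) k l)"
  define D where "D = (\<lambda>i j. H i * (w i * w' j - w' i * w j))"
  have q': "0 \<le> q'" using q by linarith
  have A2: "2 * (\<Sum>i\<le>n. h i * w i) = (\<Sum>i\<le>n. H i * w i)"
  proof -
    have "(\<Sum>i\<le>n. h i * w i) = (\<Sum>i\<le>n. h (k+l-i) * w i)"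
      unfolding n_def w_def by (rule sum_sym)
    then have "2 * (\<Sum>i\<le>n. h i * w i) = (\<Sum>i\<le>n. h i * w i) + (\<Sum>i\<le>n. h (k+l-i) * w i)" by simp
    also have "\<dots> = (\<Sum>i\<le>n. H i * w i)"
      by (simp add: sum.distrib[symmetric] H_def h_def algebra_simps)
    finally show ?thesis .
  qed
  have A2': "2 * (\<Sum>i\<le>n. h i * w' i) = (\<Sum>i\<le>n. H i * w' i)"
  proof -
    have "(\<Sum>i\<le>n. h i * w' i) = (\<Sum>i\<le>n. h (k+l-i) * w' i)"
      unfolding n_def w'_def by (rule sum_sym)
    then have "2 * (\<Sum>i\<le>n. h i * w' i) = (\<Sum>i\<le>n. h i * w' i) + (\<Sum>i\<le>n. h (k+l-i) * w' i)" by simp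
    also have "\<dots> = (\<Sum>i\<le>n. H i * w' i)"
      by (simp add: sum.distrib[symmetric] H_def h_def algebra_simps)
    finally show ?thesis .
  qed
  have S: "(\<Sum>i\<le>n. \<Sum>j\<le>n. D i j) = (\<Sum>i\<le>n. H i * w i) * (\<Sum>j\<le>n. w' j) - (\<Sum>i\<le>n. H i * w' i) * (\<Sum>j\<le>n. w j)"
    by (simp add: D_def right_diff_distrib sum_subtractf sum_product mult.assoc)
  have sw: "(\<Sum>i\<le>n. \<Sum>j\<le>n. D i j) = (\<Sum>i\<le>n. \<Sum>j\<le>n. D j i)"
    by (rule sum.swap)
  have "(\<Sum>i\<le>n. \<Sum>j\<le>n. D i j + D j i) \<le> 0"
  proof (intro sum_nonpos)
    fix i j assume "i \<in> {..n}" "j \<in> {..n}"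
    then have "(H i - H j) * (w i * w' j - w' i * w j) \<le> 0"
      unfolding H_def w_def w'_def n_def by (intro D_pair q) auto
    moreover have "D i j + D j i = (H i - H j) * (w i * w' j - w' i * w j)"
      by (simp add: D_def algebra_simps)
    ultimately show "D i j + D j i \<le> 0" by simp
  qed
  then have "(\<Sum>i\<le>n. \<Sum>j\<le>n. D i j) + (\<Sum>i\<le>n. \<Sum>j\<le>n. D j i) \<le> 0"
    by (simp add: sum.distrib)
  then have Sle: "(\<Sum>i\<le>n. \<Sum>j\<le>n. D i j) \<le> 0" using sw by simp
  have W: "W q k l = (\<Sum>j\<le>n. w j)" "W q' k l = (\<Sum>j\<le>n. w' j)"
    by (simp_all add: W_def n_def w_def w'_def)
  have Wp: "0 < (\<Sum>j\<le>n. w j)" "0 < (\<Sum>j\<le>n. w' j)"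
    using W_pos[OF q(1), of k l] W_pos[OF q', of k l] W by auto
  have G: "G q k l r = (\<Sum>i\<le>n. h i * w i) / (\<Sum>j\<le>n. w j)"
     "G q' k l r = (\<Sum>i\<le>n. h i * w' i) / (\<Sum>j\<le>n. w' j)"
    by (simp_all add: G_eq W h_def w_def w'_def n_def)
  have "(\<Sum>i\<le>n. h i * w i) * (\<Sum>j\<le>n. w' j) \<le> (\<Sum>i\<le>n. h i * w' i) * (\<Sum>j\<le>n. w j)"
  proof -
    have "(\<Sum>i\<le>n. H i * w i) * (\<Sum>j\<le>n. w' j) - (\<Sum>i\<le>n. H i * w' i) * (\<Sum>j\<le>n. w j) \<le> 0"
      using Sle S by simp
    then have "2 * ((\<Sum>i\<le>n. h i * w i) * (\<Sum>j\<le>n. w' j)) - 2 * ((\<Sum>i\<le>n. h i * w' i) * (\<Sum>j\<le>n. w j)) \<le> 0"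
      unfolding A2[symmetric] A2'[symmetric] by (simp add: mult.assoc)
    then show ?thesis by linarith
  qed
  then show ?thesis unfolding G using Wp by (simp add: frac_le_eq field_simps)
qed


lemma G_zero: "0 \<le> q \<Longrightarrow> G q k l 0 = 1"
  using W_pos[of q k l] by (simp add: G_eq W_def[symmetric])

lemma G_one: "0 \<le> q \<Longrightarrow> G q k l 1 = real (k + l) / 2"
proof -
  assume q: "0 \<le> q"
  define w where "w = (\<lambda>i. Tw q i (k+l-i) k l)"
  have s: "(\<Sum>i\<le>k+l. real i * w i) = (\<Sum>i\<le>k+l. real (k+l-i) * w i)"
    unfolding w_def by (rule sum_sym)
  have "(\<Sum>i\<le>k+l. (real i + real (k+l-i)) * w i) = 2 * (\<Sum>i\<le>k+l. real i * w i)"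
    unfolding distrib_right sum.distrib s[symmetric] by simp
  then have "2 * (\<Sum>i\<le>k+l. real i * w i) = (\<Sum>i\<le>k+l. (real i + real (k+l-i)) * w i)" by simp
  also have "\<dots> = (\<Sum>i\<le>k+l. real (k+l) * w i)"
    by (rule sum.cong) (auto simp: of_nat_diff)
  also have "\<dots> = real (k+l) * W q k l" by (simp add: W_def w_def sum_distrib_left)
  finally have "(\<Sum>i\<le>k+l. real i * w i) = real (k+l) * W q k l / 2" by simp
  then show ?thesis using W_pos[OF q, of k l] by (simp add: G_eq w_def)
qed

lemma card_aux:
  assumes "i \<le> k + l"
  shows "card {x\<in>{..k}. x \<le> i \<and> i \<le> x + l} = 1 + min (min k l) (min i (k+l-i))"
proof -
  have "{x\<in>{..k}. x \<le> i \<and> i \<le> x + l} = {i-l..min k i}" by auto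
  then have c: "card {x\<in>{..k}. x \<le> i \<and> i \<le> x + l} = Suc (min k i) - (i - l)" by simp
  obtain j where j: "j = k + l - i" by blast
  then have ij: "i + j = k + l" using assms by simp
  have "Suc (min k i) - (i - l) = 1 + min (min k l) (min i j)" using ij by (auto simp: min_def)
  then show ?thesis using c j by simp
qed

lemma count_sum:
  fixes f :: "nat \<Rightarrow> real"
  shows "(\<Sum>i\<le>k+l. f i * (1 + real (min (min k l) (min i (k+l-i))))) = (\<Sum>x\<le>k. \<Sum>y\<le>l. f (x+y))"
proof -
  have inner: "(\<Sum>y\<le>l. f (x+y)) = (\<Sum>i\<le>k+l. if x \<le> i \<and> i \<le> x+l then f i else 0)" if x: "x \<le> k" for x
  proof -
    have "(\<Sum>i\<le>k+l. if x \<le> i \<and> i \<le> x+l then f i else 0) = sum f {i\<in>{..k+l}. x \<le> i \<and> i \<le> x+l}"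
      by (rule sum.inter_filter[symmetric]) simp
    also have "{i\<in>{..k+l}. x \<le> i \<and> i \<le> x+l} = {0+x..l+x}" using x by auto
    also have "sum f {0+x..l+x} = (\<Sum>y\<in>{0..l}. f (y + x))" by (rule sum.shift_bounds_cl_nat_ivl)
    also have "\<dots> = (\<Sum>y\<le>l. f (x+y))" by (simp add: atMost_atLeast0 add.commute)
    finally show ?thesis by simp
  qed
  have "(\<Sum>x\<le>k. \<Sum>y\<le>l. f (x+y)) = (\<Sum>x\<le>k. \<Sum>i\<le>k+l. if x \<le> i \<and> i \<le> x+l then f i else 0)"
    by (rule sum.cong) (auto simp: inner)
  also have "\<dots> = (\<Sum>i\<le>k+l. \<Sum>x\<le>k. if x \<le> i \<and> i \<le> x+l then f i else 0)"
    by (rule sum.swap)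
  also have "\<dots> = (\<Sum>i\<le>k+l. f i * (1 + real (min (min k l) (min i (k+l-i)))))"
  proof (rule sum.cong)
    fix i assume i: "i \<in> {..k+l}"
    have "(\<Sum>x\<le>k. if x \<le> i \<and> i \<le> x+l then f i else 0) = sum (\<lambda>_. f i) {x\<in>{..k}. x \<le> i \<and> i \<le> x + l}"
      by (rule sum.inter_filter[symmetric]) simp
    also have "\<dots> = real (card {x\<in>{..k}. x \<le> i \<and> i \<le> x + l}) * f i" by simp
    also have "\<dots> = f i * (1 + real (min (min k l) (min i (k+l-i))))"
      using card_aux[of i k l] i by simp
    finally show "(\<Sum>x\<le>k. if x \<le> i \<and> i \<le> x+l then f i else 0) = f i * (1 + real (min (min k l) (min i (k+l-i))))" .
  qed simp
  finally show ?thesis by simp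
qed

lemma W_one: "W 1 k l = real (k+1) * real (l+1)"
proof -
  have "W 1 k l = (\<Sum>i\<le>k+l. (\<lambda>_. 1::real) i * (1 + real (min (min k l) (min i (k+l-i)))))"
    unfolding W_def by (rule sum.cong) (auto simp: Tw_diag)
  also have "\<dots> = (\<Sum>x\<le>k. \<Sum>y\<le>l. (\<lambda>_. 1::real) (x+y))" by (rule count_sum)
  finally show ?thesis by simp
qed

lemma G_1:
  "G 1 k l r = (\<Sum>s\<le>r. (real (k choose s) / real (s+1)) * (real (l choose (r-s)) / real (r-s+1)))"
proof -
  have num: "(\<Sum>i\<le>k+l. real (i choose r) * Tw 1 i (k+l-i) k l) = (\<Sum>x\<le>k. \<Sum>y\<le>l. real ((x+y) choose r))"
  proof -
    have "(\<Sum>i\<le>k+l. real (i choose r) * Tw 1 i (k+l-i) k l)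
       = (\<Sum>i\<le>k+l. (\<lambda>i. real (i choose r)) i * (1 + real (min (min k l) (min i (k+l-i)))))"
      by (rule sum.cong) (auto simp: Tw_diag)
    also have "\<dots> = (\<Sum>x\<le>k. \<Sum>y\<le>l. real ((x+y) choose r))" by (rule count_sum)
    finally show ?thesis .
  qed
  have "(\<Sum>x\<le>k. \<Sum>y\<le>l. real ((x+y) choose r))
      = (\<Sum>x\<le>k. \<Sum>y\<le>l. \<Sum>s\<le>r. real (x choose s) * real (y choose (r-s)))"
    by (simp add: vandermonde[symmetric] of_nat_sum)
  also have "\<dots> = (\<Sum>s\<le>r. (\<Sum>x\<le>k. real (x choose s)) * (\<Sum>y\<le>l. real (y choose (r-s))))"
  proof -
    have "(\<Sum>x\<le>k. \<Sum>y\<le>l. \<Sum>s\<le>r. real (x choose s) * real (y choose (r-s)))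
        = (\<Sum>x\<le>k. \<Sum>s\<le>r. \<Sum>y\<le>l. real (x choose s) * real (y choose (r-s)))"
      by (rule sum.cong[OF refl], rule sum.swap)
    also have "\<dots> = (\<Sum>s\<le>r. \<Sum>x\<le>k. \<Sum>y\<le>l. real (x choose s) * real (y choose (r-s)))"
      by (rule sum.swap)
    also have "\<dots> = (\<Sum>s\<le>r. (\<Sum>x\<le>k. real (x choose s)) * (\<Sum>y\<le>l. real (y choose (r-s))))"
      by (simp only: sum_product)
    finally show ?thesis .
  qed
  also have "\<dots> = (\<Sum>s\<le>r. real (Suc k choose Suc s) * real (Suc l choose Suc (r-s)))"
    by (simp add: of_nat_sum[symmetric] sum_choose_upper)
  also have "\<dots> = (\<Sum>s\<le>r. (real (k+1) * (real (k choose s) / real (s+1))) * (real (l+1) * (real (l choose (r-s)) / real (r-s+1))))"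
  proof (rule sum.cong)
    fix s
    have e1: "real (Suc k choose Suc s) = real (k+1) * (real (k choose s) / real (s+1))"
      using arg_cong[OF Suc_times_binomial_eq[of k s], of real] by (simp add: field_simps)
    have e2: "real (Suc l choose Suc (r-s)) = real (l+1) * (real (l choose (r-s)) / real (r-s+1))"
      using arg_cong[OF Suc_times_binomial_eq[of l "r-s"], of real] by (simp add: field_simps)
    show "real (Suc k choose Suc s) * real (Suc l choose Suc (r-s)) = (real (k+1) * (real (k choose s) / real (s+1))) * (real (l+1) * (real (l choose (r-s)) / real (r-s+1)))"
      by (simp only: e1 e2)
  qed simp
  also have "\<dots> = (real (k+1) * real (l+1)) * (\<Sum>s\<le>r. (real (k choose s) / real (s+1)) * (real (l choose (r-s)) / real (r-s+1)))"
    by (simp add: sum_distrib_left algebra_simps)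
  finally show ?thesis
    by (simp add: G_eq num W_one del: of_nat_add of_nat_Suc)
qed


lemma suminf_swap_enn: "(\<Sum>i. \<Sum>j. f i j) = (\<Sum>j. \<Sum>i. f i j :: ennreal)"
proof -
  have "(\<integral>\<^sup>+x. \<integral>\<^sup>+i. f i x \<partial>count_space UNIV \<partial>count_space UNIV)
      = (\<integral>\<^sup>+i. \<integral>\<^sup>+x. f i x \<partial>count_space UNIV \<partial>count_space (UNIV::nat set))"
    by (rule nn_integral_count_space_nn_integral) auto
  then show ?thesis by (simp add: nn_integral_count_space_nat)
qed

lemma infsum_suminf_nonneg:
  fixes f :: "nat \<Rightarrow> real"
  assumes "f summable_on UNIV" "\<And>n. 0 \<le> f n"
  shows "infsum f UNIV = suminf f"
proof -
  have "summable f" using assms(1) by (rule summable_on_imp_summable)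
  then have "(f has_sum suminf f) UNIV"
    by (intro sums_nonneg_imp_has_sum) (auto simp: summable_sums assms(2))
  then show ?thesis by (rule infsumI)
qed

lemma M1plusD: "p \<in> M1plus \<Longrightarrow> (\<forall>k. 0 \<le> p k) \<and> p sums 1"
  by (simp add: M1plus_def)

lemma pp_has_sum:
  assumes "p \<in> M1plus"
  shows "((\<lambda>l. p k * p l) has_sum p k) UNIV"
proof -
  have "(p has_sum 1) UNIV" using M1plusD[OF assms] by (intro sums_nonneg_imp_has_sum) auto
  then show ?thesis using has_sum_cmult_right[of p UNIV 1 "p k"] by simp
qed

lemma pp_summable:
  assumes "p \<in> M1plus"
  shows "(\<lambda>(k,l). p k * p l) summable_on UNIV"
proof -
  have "(\<lambda>(k,l). p k * p l) summable_on (UNIV \<times> UNIV)"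
  proof (rule summable_on_SigmaI[where g = p])
    show "\<And>x. x \<in> UNIV \<Longrightarrow> ((\<lambda>y. case (x, y) of (k, l) \<Rightarrow> p k * p l) has_sum p x) UNIV"
      using pp_has_sum[OF assms] by simp
    show "p summable_on UNIV"
      using M1plusD[OF assms] by (intro summable_nonneg_imp_summable_on) (auto simp: sums_iff)
    show "\<And>x y. x \<in> UNIV \<Longrightarrow> y \<in> UNIV \<Longrightarrow> 0 \<le> (case (x, y) of (k, l) \<Rightarrow> p k * p l)"
      using M1plusD[OF assms] by simp
  qed
  then show ?thesis by simp
qed

lemma R_enn:
  assumes p: "p \<in> M1plus" and q: "0 \<le> q"
  shows "ennreal (R q p i) = (\<Sum>k. \<Sum>l. ennreal (T q i (k+l-i) k l * p k * p l))"
proof -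
  have p0: "\<And>k. 0 \<le> p k" using M1plusD[OF p] by auto
  define g where "g = (\<lambda>(k,l). T q i (k+l-i) k l * p k * p l)"
  define F where "F = (\<lambda>(j,k,l). T q i j k l * p k * p l)"
  define h where "h = (\<lambda>(k::nat,l::nat). (k+l-i, k, l))"
  have g0: "\<And>x. 0 \<le> g x" using p0 by (auto simp: g_def T_nonneg q)
  have gle: "\<And>k l. g (k,l) \<le> p k * p l"
  proof -
    fix k l
    have "T q i (k+l-i) k l * (p k * p l) \<le> 1 * (p k * p l)"
      by (rule mult_right_mono) (use T_le1[OF q] p0 in auto)
    then show "g (k,l) \<le> p k * p l" by (simp add: g_def mult.assoc)
  qed
  have "R q p i = infsum F UNIV" by (simp add: R_def F_def)
  also have "\<dots> = infsum F (range h)"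
  proof (rule infsum_cong_neutral)
    fix x assume "x \<in> UNIV - range h"
    obtain j k l where x: "x = (j,k,l)" by (cases x) auto
    have "x \<noteq> h (k,l)" using \<open>x \<in> UNIV - range h\<close> by auto
    then have nj: "j \<noteq> k + l - i" by (simp add: x h_def)
    then have "i + j \<noteq> k + l" by auto
    then show "F x = 0" by (simp add: x F_def T_eq Tw_def)
  qed auto
  also have "\<dots> = infsum (F \<circ> h) UNIV"
    by (rule infsum_reindex) (auto simp: inj_on_def h_def)
  also have "F \<circ> h = g" by (auto simp: F_def h_def g_def)
  finally have R1: "R q p i = infsum g UNIV" .
  have gs: "g summable_on UNIV"
    by (rule summable_on_comparison_test[OF pp_summable[OF p]]) (auto simp: gle g0)
  have gs2: "g summable_on (UNIV \<times> UNIV)" using gs by simp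
  have R2: "infsum g UNIV = infsum (\<lambda>k. infsum (\<lambda>l. g (k,l)) UNIV) UNIV"
    using infsum_Sigma_banach[OF gs2] by simp
  have inner_s: "(\<lambda>l. g (k,l)) summable_on UNIV" for k
    by (rule summable_on_comparison_test[OF has_sum_imp_summable[OF pp_has_sum[OF p, of k]]])
       (auto simp: gle g0)
  have outer_s: "(\<lambda>k. infsum (\<lambda>l. g (k,l)) UNIV) summable_on UNIV"
    using summable_on_Sigma_banach[of "\<lambda>k l. g (k,l)" UNIV "\<lambda>_. UNIV"] gs2 by simp
  have inner: "infsum (\<lambda>l. g (k,l)) UNIV = (\<Sum>l. g (k,l))" for k
    by (rule infsum_suminf_nonneg[OF inner_s]) (simp add: g0)
  have outer_s': "(\<lambda>k. \<Sum>l. g (k,l)) summable_on UNIV" using outer_s by (simp add: inner)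
  have s0: "0 \<le> (\<Sum>l. g (k,l))" for k
    using inner[of k] infsum_nonneg[of UNIV "\<lambda>l. g (k,l)"] g0 by simp
  have "R q p i = (\<Sum>k. \<Sum>l. g (k,l))"
    using R1 R2 inner infsum_suminf_nonneg[OF outer_s' s0] by simp
  then have "ennreal (R q p i) = (\<Sum>k. ennreal (\<Sum>l. g (k,l)))"
    using suminf_ennreal2[OF s0 summable_on_imp_summable[OF outer_s'], symmetric] by simp
  also have "\<dots> = (\<Sum>k. \<Sum>l. ennreal (g (k,l)))"
    using suminf_ennreal2[OF g0 summable_on_imp_summable[OF inner_s]] by simp
  finally show ?thesis by (simp add: g_def)
qed


lemma aR:
  assumes p: "p \<in> M1plus" and q: "0 \<le> q"
  shows "a (R q p) r = ennreal (1 / (real r + 1)) * (\<Sum>k. \<Sum>l. ennreal (p k * p l * G q k l r))"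
proof -
  have p0: "\<And>k. 0 \<le> p k" using M1plusD[OF p] by auto
  define X where "X = (\<lambda>i k l. ennreal (real (i choose r) * (T q i (k+l-i) k l * p k * p l)))"
  have R0: "0 \<le> R q p i" for i
    unfolding R_def by (rule infsum_nonneg) (auto simp: T_nonneg q p0)
  have trm: "(if r \<le> i then ennreal (real (i choose r) * R q p i) else 0) = (\<Sum>k. \<Sum>l. X i k l)" for i
  proof -
    have "(if r \<le> i then ennreal (real (i choose r) * R q p i) else 0)
        = ennreal (real (i choose r)) * ennreal (R q p i)"
      by (cases "r \<le> i") (auto simp: ennreal_mult' R0)
    also have "\<dots> = ennreal (real (i choose r)) * (\<Sum>k. \<Sum>l. ennreal (T q i (k+l-i) k l * p k * p l))"
      by (simp add: R_enn[OF p q])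
    also have "\<dots> = (\<Sum>k. \<Sum>l. X i k l)"
      by (simp add: X_def ennreal_mult')
    finally show ?thesis .
  qed
  have fin: "(\<Sum>i. X i k l) = ennreal (p k * p l * G q k l r)" for k l
  proof -
    have "(\<Sum>i. X i k l) = (\<Sum>i\<le>k+l. X i k l)"
      by (rule suminf_finite) (auto simp: X_def T_eq Tw_def)
    also have "\<dots> = ennreal (\<Sum>i\<le>k+l. real (i choose r) * (T q i (k+l-i) k l * p k * p l))"
      unfolding X_def by (rule sum_ennreal) (auto intro!: mult_nonneg_nonneg T_nonneg q p0)
    also have "(\<Sum>i\<le>k+l. real (i choose r) * (T q i (k+l-i) k l * p k * p l)) = p k * p l * G q k l r"
      by (simp add: G_def sum_distrib_left algebra_simps)
    finally show ?thesis .
  qed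
  have "a (R q p) r = ennreal (1 / (real r + 1)) * (\<Sum>i. \<Sum>k. \<Sum>l. X i k l)"
    unfolding a_def using trm by simp
  also have "(\<Sum>i. \<Sum>k. \<Sum>l. X i k l) = (\<Sum>k. \<Sum>i. \<Sum>l. X i k l)"
    by (rule suminf_swap_enn)
  also have "\<dots> = (\<Sum>k. \<Sum>l. \<Sum>i. X i k l)"
    by (simp add: suminf_swap_enn[of "\<lambda>i l. X i _ l"])
  also have "\<dots> = (\<Sum>k. \<Sum>l. ennreal (p k * p l * G q k l r))"
    by (simp add: fin)
  finally show ?thesis .
qed

lemma aR_mono:
  assumes p: "p \<in> M1plus" and q: "0 \<le> q" "q \<le> q'"
  shows "a (R q p) r \<le> a (R q' p) r"
proof -
  have p0: "\<And>k. 0 \<le> p k" using M1plusD[OF p] by auto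
  have "(\<Sum>k. \<Sum>l. ennreal (p k * p l * G q k l r)) \<le> (\<Sum>k. \<Sum>l. ennreal (p k * p l * G q' k l r))"
    by (intro suminf_le summableI ennreal_leI mult_left_mono G_mono q) (auto simp: p0)
  then show ?thesis using q by (simp add: aR[OF p] mult_left_mono)
qed


lemma a_alt:
  assumes p0: "\<And>k. 0 \<le> p k"
  shows "a p s = (\<Sum>l. ennreal (p l * (real (l choose s) / real (s+1))))"
proof -
  have "a p s = (\<Sum>l. ennreal (1 / (real s + 1)) * (if s \<le> l then ennreal (real (l choose s) * p l) else 0))"
    by (simp add: a_def)
  also have "\<dots> = (\<Sum>l. ennreal (p l * (real (l choose s) / real (s+1))))"
  proof (rule suminf_cong)
    fix l
    show "ennreal (1 / (real s + 1)) * (if s \<le> l then ennreal (real (l choose s) * p l) else 0)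
        = ennreal (p l * (real (l choose s) / real (s+1)))"
      by (cases "s \<le> l") (auto simp: ennreal_mult'[symmetric] p0 field_simps)
  qed
  finally show ?thesis .
qed

lemma aR1:
  assumes p: "p \<in> M1plus"
  shows "a (R 1 p) r = ennreal (1 / (real r + 1)) * (\<Sum>s\<le>r. a p s * a p (r-s))"
proof -
  have p0: "\<And>k. 0 \<le> p k" using M1plusD[OF p] by auto
  define U where "U = (\<lambda>s k. ennreal (p k * (real (k choose s) / real (s+1))))"
  have e: "ennreal (p k * p l * G 1 k l r) = (\<Sum>s\<le>r. U s k * U (r-s) l)" for k l
  proof -
    define Y where "Y = (\<lambda>s. (p k * (real (k choose s) / real (s+1))) * (p l * (real (l choose (r-s)) / real (r-s+1))))"
    have eq: "p k * p l * G 1 k l r = (\<Sum>s\<le>r. Y s)"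
      by (simp add: Y_def G_1 sum_distrib_left algebra_simps)
    have "ennreal (p k * p l * G 1 k l r) = (\<Sum>s\<le>r. ennreal (Y s))"
      unfolding eq by (rule sum_ennreal[symmetric]) (auto simp: Y_def p0)
    also have "\<dots> = (\<Sum>s\<le>r. U s k * U (r-s) l)"
      unfolding U_def Y_def by (rule sum.cong[OF refl], rule ennreal_mult') (simp add: p0)
    finally show ?thesis .
  qed
  have "(\<Sum>k. \<Sum>l. ennreal (p k * p l * G 1 k l r)) = (\<Sum>k. \<Sum>l. \<Sum>s\<le>r. U s k * U (r-s) l)"
    by (simp add: e)
  also have "\<dots> = (\<Sum>k. \<Sum>s\<le>r. \<Sum>l. U s k * U (r-s) l)"
    by (subst suminf_sum) auto
  also have "\<dots> = (\<Sum>s\<le>r. \<Sum>k. \<Sum>l. U s k * U (r-s) l)"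
    by (subst suminf_sum) auto
  also have "\<dots> = (\<Sum>s\<le>r. a p s * a p (r-s))"
    by (simp add: a_alt[OF p0] U_def)
  finally show ?thesis by (simp add: aR[OF p])
qed

lemma a_le:
  assumes "aInX p \<alpha> \<delta>" "0 < \<alpha>" "\<alpha> \<le> \<delta>"
  shows "a p s \<le> ennreal (\<delta> ^ s)"
proof -
  have fin: "a p s < top" using assms(1) by (simp add: aInX_def top.not_eq_extremum)
  have X: "(\<lambda>k. enn2real (a p k)) \<in> X \<alpha> \<delta>" using assms(1) by (simp add: aInX_def)
  have "enn2real (a p s) \<le> \<delta> ^ s"
  proof (cases "s \<ge> 2")
    case True then show ?thesis using X by (simp add: X_def)
  next
    case False
    then have "s = 0 \<or> s = 1" by auto
    then show ?thesis using X assms by (auto simp: X_def)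
  qed
  then have "ennreal (enn2real (a p s)) \<le> ennreal (\<delta> ^ s)" by (rule ennreal_leI)
  then show ?thesis using fin by simp
qed

lemma aR1_le:
  assumes p: "p \<in> M1plus" and "aInX p \<alpha> \<delta>" "0 < \<alpha>" "\<alpha> \<le> \<delta>"
  shows "a (R 1 p) r \<le> ennreal (\<delta> ^ r)"
proof -
  have d0: "0 \<le> \<delta>" using assms by linarith
  have "(\<Sum>s\<le>r. a p s * a p (r-s)) \<le> (\<Sum>s\<le>r. ennreal (\<delta> ^ s) * ennreal (\<delta> ^ (r-s)))"
    by (intro sum_mono mult_mono a_le[OF assms(2-4)]) auto
  also have "\<dots> = (\<Sum>s\<le>r. ennreal (\<delta> ^ r))"
  proof (rule sum.cong)
    fix s assume "s \<in> {..r}"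
    then have "\<delta> ^ s * \<delta> ^ (r-s) = \<delta> ^ r" by (simp add: power_add[symmetric])
    then show "ennreal (\<delta> ^ s) * ennreal (\<delta> ^ (r-s)) = ennreal (\<delta> ^ r)"
      by (simp add: ennreal_mult'[symmetric] d0)
  qed simp
  also have "\<dots> = ennreal (\<Sum>s\<le>r. \<delta> ^ r)" by (rule sum_ennreal) (simp add: d0)
  also have "(\<Sum>s\<le>r. \<delta> ^ r) = (real r + 1) * \<delta> ^ r" by simp
  finally have le: "(\<Sum>s\<le>r. a p s * a p (r-s)) \<le> ennreal ((real r + 1) * \<delta> ^ r)" .
  have "a (R 1 p) r \<le> ennreal (1 / (real r + 1)) * ennreal ((real r + 1) * \<delta> ^ r)"
    unfolding aR1[OF p] by (rule mult_left_mono[OF le]) simp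
  also have "\<dots> = ennreal (\<delta> ^ r)"
    by (simp add: ennreal_mult'[symmetric])
  finally show ?thesis .
qed


lemma aR0:
  assumes p: "p \<in> M1plus" and q: "0 \<le> q"
  shows "a (R q p) 0 = 1"
proof -
  have p0: "\<And>k. 0 \<le> p k" and ps: "p sums 1" using M1plusD[OF p] by auto
  have S: "(\<Sum>k. ennreal (p k)) = 1" using suminf_ennreal_eq[OF p0 ps] by simp
  have "(\<Sum>k. \<Sum>l. ennreal (p k * p l * G q k l 0)) = (\<Sum>k. \<Sum>l. ennreal (p k) * ennreal (p l))"
    by (simp add: G_zero q ennreal_mult' p0)
  also have "\<dots> = 1" by (simp add: S)
  finally show ?thesis by (simp add: aR[OF p q])
qed

lemma aR1_eq:
  assumes p: "p \<in> M1plus" and q: "0 \<le> q"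
  shows "a (R q p) 1 = a p 1"
proof -
  have p0: "\<And>k. 0 \<le> p k" and ps: "p sums 1" using M1plusD[OF p] by auto
  have S: "(\<Sum>k. ennreal (p k)) = 1" using suminf_ennreal_eq[OF p0 ps] by simp
  define A where "A = (\<lambda>k. ennreal (real k * p k))"
  define B where "B = (\<lambda>k. ennreal (p k))"
  define h where "h = ennreal (1/2)"
  have h2: "h * 2 = 1"
  proof -
    have "h * 2 = ennreal (1/2 * 2)" unfolding h_def by (subst ennreal_mult') auto
    then show ?thesis by simp
  qed
  have e: "ennreal (p k * p l * G q k l 1) = h * (A k * B l + B k * A l)" for k l
  proof -
    have "p k * p l * G q k l 1 = 1/2 * (real k * p k * p l + p k * (real l * p l))"
    proof -
      have g: "G q k l 1 = real (k+l) / 2" by (rule G_one[OF q])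
      show ?thesis by (simp only: g) (simp add: field_simps)
    qed
    then have "ennreal (p k * p l * G q k l 1) = ennreal (1/2 * (real k * p k * p l + p k * (real l * p l)))"
      by (simp only:)
    also have "\<dots> = h * ennreal (real k * p k * p l + p k * (real l * p l))"
      unfolding h_def by (rule ennreal_mult') simp
    also have "ennreal (real k * p k * p l + p k * (real l * p l)) = ennreal (real k * p k * p l) + ennreal (p k * (real l * p l))"
      by (rule ennreal_plus) (auto simp: p0)
    also have "ennreal (real k * p k * p l) = A k * B l"
      unfolding A_def B_def by (rule ennreal_mult') (simp add: p0)
    also have "ennreal (p k * (real l * p l)) = B k * A l"
      unfolding A_def B_def by (rule ennreal_mult') (simp add: p0)
    finally show ?thesis .
  qed
  have "(\<Sum>k. \<Sum>l. ennreal (p k * p l * G q k l 1)) = (\<Sum>k. \<Sum>l. h * (A k * B l + B k * A l))"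
    by (simp only: e)
  also have "\<dots> = h * (\<Sum>k. A k * (\<Sum>l. B l) + B k * (\<Sum>l. A l))"
    by (simp add: suminf_add[symmetric])
  also have "\<dots> = h * ((\<Sum>k. A k) + (\<Sum>k. A k))"
    by (simp add: suminf_add[symmetric] S B_def)
  also have "\<dots> = (\<Sum>k. A k)"
    by (simp add: mult_2[symmetric] mult.assoc[symmetric] h2 mult.commute[of h 2])
  finally have L: "(\<Sum>k. \<Sum>l. ennreal (p k * p l * G q k l 1)) = (\<Sum>k. A k)" .
  have "a p 1 = (\<Sum>l. ennreal (p l * (real (l choose 1) / real (1+1))))" by (rule a_alt[OF p0])
  also have "\<dots> = (\<Sum>l. h * A l)"
  proof (rule suminf_cong)
    fix l
    have "p l * (real (l choose 1) / real (1+1)) = 1/2 * (real l * p l)" by simp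
    then show "ennreal (p l * (real (l choose 1) / real (1+1))) = h * A l"
      unfolding A_def h_def by (simp only:) (rule ennreal_mult', simp)
  qed
  also have "\<dots> = h * (\<Sum>k. A k)" by simp
  finally have R: "a p 1 = h * (\<Sum>k. A k)" .
  show ?thesis using L R by (simp add: aR[OF p q] h_def)
qed

theorem proposition16:
  fixes \<alpha> \<delta> :: real and p :: "nat \<Rightarrow> real"
  assumes "0 < \<alpha>" and "\<alpha> \<le> \<delta>" and "p \<in> M1plus" and "aInX p \<alpha> \<delta>"
  shows "(\<forall>q q' k. 0 \<le> q \<longrightarrow> q \<le> q' \<longrightarrow> q' \<le> 1 \<longrightarrow> a (R q p) k \<le> a (R q' p) k)
         \<and> (\<forall>q. 0 \<le> q \<longrightarrow> q \<le> 1 \<longrightarrow> aInX (R q p) \<alpha> \<delta>)"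
proof (intro conjI allI impI)
  fix q q' :: real and k :: nat
  assume "0 \<le> q" "q \<le> q'" "q' \<le> 1"
  then show "a (R q p) k \<le> a (R q' p) k" by (intro aR_mono assms(3))
next
  fix q :: real
  assume q: "0 \<le> q" "q \<le> 1"
  have le: "a (R q p) k \<le> ennreal (\<delta> ^ k)" for k
    using aR_mono[OF assms(3) q] aR1_le[OF assms(3) assms(4) assms(1) assms(2)] order_trans by blast
  have fin: "a (R q p) k \<noteq> \<infinity>" for k
  proof
    assume "a (R q p) k = \<infinity>"
    with le[of k] show False by (simp add: top_unique)
  qed
  have X: "(\<lambda>k. enn2real (a p k)) \<in> X \<alpha> \<delta>" using assms(4) by (simp add: aInX_def)
  have d0: "0 \<le> \<delta>" using assms by linarith
  have k2: "enn2real (a (R q p) k) \<le> \<delta> ^ k" for k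
  proof -
    have "enn2real (a (R q p) k) \<le> enn2real (ennreal (\<delta> ^ k))"
      by (rule enn2real_mono[OF le]) simp
    then show ?thesis using d0 by simp
  qed
  have "enn2real (a p 1) = \<alpha>" using X unfolding X_def by blast
  then have e1: "enn2real (a (R q p) 1) = \<alpha>" by (simp only: aR1_eq[OF assms(3) q(1)])
  have e0: "enn2real (a (R q p) 0) = 1" by (simp only: aR0[OF assms(3) q(1)]) simp
  have "(\<lambda>k. enn2real (a (R q p) k)) \<in> X \<alpha> \<delta>"
    unfolding X_def using e0 e1 k2 by (simp del: One_nat_def)
  then show "aInX (R q p) \<alpha> \<delta>" using fin by (simp add: aInX_def)
qed

end
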